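(* Let $S=(\mathcal{X},\mathcal{X}_0,\mathcal{U},\delta,\mathcal{Y},\mathcal{H})$ be a transition system that has free input, is deterministic, and satisfies $\mathcal{X}_0=\mathcal{X}$. Let $\ell\ge 0$ be an integer, let $S_\ell=(\mathcal{X}_\ell,\mathcal{X}_{\ell0},\mathcal{U},\delta_\ell,\mathcal{Y},\mathcal{H}_\ell)$ be the strongest asynchronous $\ell$-complete abstraction (SA$\ell$CA) of $S$, and let $$\mathcal{R}=\{(x,\zeta)\in\mathcal{X}\times\mathcal{X}_\ell:\ \zeta\in\mathcal{E}_\ell(x)\}.$$ Then $\mathcal{R}$ is a simulation relation from $S$ to $S_\ell$ with respect to $\mathcal{U}\times\mathcal{Y}$. Further, if $S$ has free input, the inverse relation $\mathcal{R}^{-1}=\{(\zeta,x):(x,\zeta)\in\mathcal{R}\}$ is an alternating simulation relation from $S_\ell$ to $S$ with respect to $\mathcal{U}\times\mathcal{Y}$.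
   Context: A transition system (TS) is a tuple $S=(\mathcal{X},\mathcal{X}_0,\mathcal{U},\delta,\mathcal{Y},\mathcal{H})$: state set $\mathcal{X}$, initial set $\mathcal{X}_0\subseteq\mathcal{X}$, finite input set $\mathcal{U}$, output set $\mathcal{Y}$, transition relation $\delta\subseteq\mathcal{X}\times\mathcal{U}\times\mathcal{X}$, output map $\mathcal{H}:\mathcal{X}\to\mathcal{Y}$. Let $\mathrm{Post}_u(x)=\{x':(x,u,x')\in\delta\}$ and $U_\delta(x)=\{u:\mathrm{Post}_u(x)\neq\emptyset\}$. $S$ is non-blocking if $U_\delta(x)\ne\emptyset$ for all $x$, has free input if $U_\delta(x)=\mathcal{U}$ for all $x$, and is deterministic if $|\mathrm{Post}_u(x)|=1$ for all $x,u$. An $H$-long internal behavior is $\xi=x_0u_0x_1\dots u_{H-1}x_H$ with $x_0\in\mathcal{X}_0$ and $(x_i,u_i,x_{i+1})\in\delta$; its external behavior is $\mathcal{H}(\xi)=y_0u_0y_1\dots u_{H-1}y_H$ with $y_i=\mathcal{H}(x_i)$. $\mathcal{I}_H(S)$, $\mathcal{B}_H(S)$ denote the sets of all $H$-long internal/external behaviors. For a sequence $s=m_0a_0\dots a_{n-1}m_n$, $s(i)=m_i$ and $s[i,i+j]=m_ia_i\dots a_{i+j-1}m_{i+j}$; behaviors are extended to negative indices by a padding symbol $\diamond$ (all state/output and input entries with index $\le -1$ equal $\diamond$), so $s[k-\ell,k]$ is defined for every $k\ge 0$. Concatenation: for $s=m_0a_0\dots m_i$ and $s'=m'_0a'_0\dots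 m'_j$ with $m_i=m'_0$, $s\cdot s'=m_0a_0\dots a_{i-1}m'_0a'_0\dots m'_j$. $\ell$-sequences: $\Pi_\ell=\bigcup_{\gamma\in\mathcal{B}_H(S)}\bigcup_{k\in[0,H]}\gamma[k-\ell,k]$ (for any $H>\ell$; under $\mathcal{X}_0=\mathcal{X}$ this does not depend on $H$); each contains $\ell+1$ outputs and $\ell$ inputs. Corresponding external strings of $x$: $\mathcal{E}_\ell(x)=\{\zeta\in\Pi_\ell:\exists\xi \text{ internal behavior},\exists j\ge0,\ \zeta=\mathcal{H}(\xi[j-\ell,j])\wedge\xi(j)=x\}$. SA$\ell$CA of $S$: $S_\ell=(\mathcal{X}_\ell,\mathcal{X}_{\ell0},\mathcal{U},\delta_\ell,\mathcal{Y},\mathcal{H}_\ell)$ with $\mathcal{X}_\ell=\Pi_\ell$; $\mathcal{X}_{\ell0}$ the set of $\ell$-sequences of the form $\mathcal{H}(\xi[-\ell,0])$ for internal behaviors $\xi$ (i.e. $\diamond$-padding followed by an initial output); $\mathcal{H}_\ell(\zeta)=\zeta(\ell)$; and $(\zeta,u,\zeta')\in\delta_\ell$ iff $\zeta[1,\ell]=\zeta'[0,\ell-1]$, the last input of $\zeta'$ equals $u$, and $\zeta\cdot\zeta'[\ell-1,\ell]\in\Pi_{\ell+1}$. Simulation relation (SR) from $S_a$ to $S_b$ (non-blocking, same inputs $\mathcal{U}$ and outputs $\mathcal{Y}$) w.r.t. $\mathcal{U}\times\mathcal{Y}$: $\mathcal{R}\subseteq\mathcal{X}_a\times\mathcal{X}_b$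 such that (i) every $x_{a0}\in\mathcal{X}_{a0}$ is related to some $x_{b0}\in\mathcal{X}_{b0}$; (ii) $(x_a,x_b)\in\mathcal{R}\Rightarrow\mathcal{H}_a(x_a)=\mathcal{H}_b(x_b)$; (iii) $(x_a,x_b)\in\mathcal{R}\Rightarrow U_{\delta_a}(x_a)\subseteq U_{\delta_b}(x_b)$ and for all $u\in U_{\delta_a}(x_a)$, $(x_a,u,x_a')\in\delta_a$ implies there is $x_b'$ with $(x_b,u,x_b')\in\delta_b$ and $(x_a',x_b')\in\mathcal{R}$. Alternating simulation relation (ASR) from $S_b$ to $S_a$ w.r.t. $\mathcal{U}\times\mathcal{Y}$: $\mathcal{R}\subseteq\mathcal{X}_b\times\mathcal{X}_a$ such that (i) every $x_{b0}\in\mathcal{X}_{b0}$ is related to some $x_{a0}\in\mathcal{X}_{a0}$; (ii) $(x_b,x_a)\in\mathcal{R}\Rightarrow\mathcal{H}_b(x_b)=\mathcal{H}_a(x_a)$; (iii) $(x_b,x_a)\in\mathcal{R}\Rightarrow U_{\delta_b}(x_b)\subseteq U_{\delta_a}(x_a)$ and for all $u\in U_{\delta_b}(x_b)$, $(x_a,u,x_a')\in\delta_a$ implies there is $x_b'$ with $(x_b,u,x_b')\in\delta_b$ and $(x_b',x_a')\in\mathcal{R}$. *)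

theory Defs
  imports Main
begin

record ('x, 'u, 'y) ts =
  St   :: "'x set"
  St0  :: "'x set"
  Inp  :: "'u set"
  Tr   :: "('x \<times> 'u \<times> 'x) set"
  Out  :: "'y set"
  Obs  :: "'x \<Rightarrow> 'y"

definition ts_wf :: "('x, 'u, 'y) ts \<Rightarrow> bool" where
  "ts_wf S \<longleftrightarrow> St0 S \<subseteq> St S \<and> Tr S \<subseteq> St S \<times> Inp S \<times> St S
     \<and> finite (Inp S) \<and> Obs S ` St S \<subseteq> Out S"

definition Post :: "('x, 'u, 'y) ts \<Rightarrow> 'u \<Rightarrow> 'x \<Rightarrow> 'x set" where
  "Post S u x = {x'. (x, u, x') \<in> Tr S}"

definition Uen :: "('x, 'u, 'y) ts \<Rightarrow> 'x \<Rightarrow> 'u set" where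
  "Uen S x = {u. Post S u x \<noteq> {}}"

definition non_blocking :: "('x, 'u, 'y) ts \<Rightarrow> bool" where
  "non_blocking S \<longleftrightarrow> (\<forall>x\<in>St S. Uen S x \<noteq> {})"

definition free_input :: "('x, 'u, 'y) ts \<Rightarrow> bool" where
  "free_input S \<longleftrightarrow> (\<forall>x\<in>St S. Uen S x = Inp S)"

definition deterministic :: "('x, 'u, 'y) ts \<Rightarrow> bool" where
  "deterministic S \<longleftrightarrow> (\<forall>x\<in>St S. \<forall>u\<in>Inp S. card (Post S u x) = 1)"

text \<open>An n-long internal behavior x_0 u_0 x_1 ... u_{n-1} x_n, given by the
  state sequence xs and the input sequence us (entries beyond n are irrelevant).\<close>
definition int_beh :: "('x, 'u, 'y) ts \<Rightarrow> nat \<Rightarrow> (nat \<Rightarrow> 'x) \<Rightarrow> (nat \<Rightarrow> 'u) \<Rightarrow> bool" where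
  "int_beh S n xs us \<longleftrightarrow> xs 0 \<in> St0 S \<and> (\<forall>i<n. (xs i, us i, xs (Suc i)) \<in> Tr S)"

text \<open>Window s[k-l, k] of a sequence (f, g) (f: states/outputs, g: inputs),
  with padding symbol \<diamond> represented by None for negative indices.\<close>
definition win :: "nat \<Rightarrow> nat \<Rightarrow> (nat \<Rightarrow> 'a) \<Rightarrow> (nat \<Rightarrow> 'b) \<Rightarrow> 'a option list \<times> 'b option list" where
  "win l k f g =
     (map (\<lambda>j. if k + j < l then None else Some (f (k + j - l))) [0..<Suc l],
      map (\<lambda>j. if k + j < l then None else Some (g (k + j - l))) [0..<l])"

definition Pi :: "('x, 'u, 'y) ts \<Rightarrow> nat \<Rightarrow> ('y option list \<times> 'u option list) set" where
  "Pi S l = {win l k (Obs S \<circ> xs) us | n k xs us. l < n \<and> k \<le> n \<and> int_beh S n xs us}"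

definition Estr :: "('x, 'u, 'y) ts \<Rightarrow> nat \<Rightarrow> 'x \<Rightarrow> ('y option list \<times> 'u option list) set" where
  "Estr S l x = {\<zeta> \<in> Pi S l. \<exists>n j xs us. int_beh S n xs us \<and> j \<le> n
                      \<and> \<zeta> = win l j (Obs S \<circ> xs) us \<and> xs j = x}"

text \<open>For zeta = (ys, us) and zeta' = (ys', us'):  zeta[1,l] = zeta'[0,l-1] means
  tl ys = butlast ys' and tl us = butlast us'; the last input of zeta' is u;
  and zeta . zeta'[l-1,l] = (ys @ [last ys'], us @ [u]) lies in Pi_{l+1}.\<close>
definition SA :: "('x, 'u, 'y) ts \<Rightarrow> nat \<Rightarrow> ('y option list \<times> 'u option list, 'u, 'y) ts" where
  "SA S l =
    \<lparr> St = Pi S l,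
      St0 = {win l 0 (Obs S \<circ> xs) us | n xs us. int_beh S n xs us},
      Inp = Inp S,
      Tr = {(\<zeta>, u, \<zeta>'). \<zeta> \<in> Pi S l \<and> \<zeta>' \<in> Pi S l \<and> u \<in> Inp S
              \<and> tl (fst \<zeta>) = butlast (fst \<zeta>') \<and> tl (snd \<zeta>) = butlast (snd \<zeta>')
              \<and> (snd \<zeta>' \<noteq> [] \<longrightarrow> last (snd \<zeta>') = Some u)
              \<and> (fst \<zeta> @ [last (fst \<zeta>')], snd \<zeta> @ [Some u]) \<in> Pi S (Suc l)},
      Out = Out S,
      Obs = (\<lambda>\<zeta>. the (last (fst \<zeta>))) \<rparr>"

definition is_SR :: "('a, 'u, 'y) ts \<Rightarrow> ('b, 'u, 'y) ts \<Rightarrow> ('a \<times> 'b) set \<Rightarrow> bool" where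
  "is_SR Sa Sb R \<longleftrightarrow>
     R \<subseteq> St Sa \<times> St Sb
   \<and> (\<forall>xa0\<in>St0 Sa. \<exists>xb0\<in>St0 Sb. (xa0, xb0) \<in> R)
   \<and> (\<forall>(xa, xb)\<in>R. Obs Sa xa = Obs Sb xb)
   \<and> (\<forall>(xa, xb)\<in>R. Uen Sa xa \<subseteq> Uen Sb xb
        \<and> (\<forall>u\<in>Uen Sa xa. \<forall>xa'. (xa, u, xa') \<in> Tr Sa \<longrightarrow>
              (\<exists>xb'. (xb, u, xb') \<in> Tr Sb \<and> (xa', xb') \<in> R)))"

definition is_ASR :: "('b, 'u, 'y) ts \<Rightarrow> ('a, 'u, 'y) ts \<Rightarrow> ('b \<times> 'a) set \<Rightarrow> bool" where
  "is_ASR Sb Sa R \<longleftrightarrow>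
     R \<subseteq> St Sb \<times> St Sa
   \<and> (\<forall>xb0\<in>St0 Sb. \<exists>xa0\<in>St0 Sa. (xb0, xa0) \<in> R)
   \<and> (\<forall>(xb, xa)\<in>R. Obs Sb xb = Obs Sa xa)
   \<and> (\<forall>(xb, xa)\<in>R. Uen Sb xb \<subseteq> Uen Sa xa
        \<and> (\<forall>u\<in>Uen Sb xb. \<forall>xa'. (xa, u, xa') \<in> Tr Sa \<longrightarrow>
              (\<exists>xb'. (xb, u, xb') \<in> Tr Sb \<and> (xb', xa') \<in> R)))"

end

theory Submission imports Defs begin

lemma win_last: "last (fst (win l j f g)) = Some (f j)"
  by (simp add: win_def last_map)

lemma win_step:
  assumes "\<forall>i\<le>j. f' i = f i" "\<forall>i<j. g' i = g i" "g' j = u"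
  shows "win (Suc l) (Suc j) f' g' = (fst (win l j f g) @ [last (fst (win l (Suc j) f' g'))], snd (win l j f g) @ [Some u])"
    and "tl (fst (win l j f g)) = butlast (fst (win l (Suc j) f' g'))"
    and "tl (snd (win l j f g)) = butlast (snd (win l (Suc j) f' g'))"
    and "snd (win l (Suc j) f' g') \<noteq> [] \<longrightarrow> last (snd (win l (Suc j) f' g')) = Some u"
proof -
  show "win (Suc l) (Suc j) f' g' = (fst (win l j f g) @ [last (fst (win l (Suc j) f' g'))], snd (win l j f g) @ [Some u])"
    unfolding win_def using assms
    by (auto intro!: nth_equalityI simp: nth_append last_map)
  show "tl (fst (win l j f g)) = butlast (fst (win l (Suc j) f' g'))"
    unfolding win_def using assms
    by (auto intro!: nth_equalityI simp del: upt_Suc simp: nth_tl nth_butlast)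
  show "tl (snd (win l j f g)) = butlast (snd (win l (Suc j) f' g'))"
    unfolding win_def using assms
    by (auto intro!: nth_equalityI simp: nth_tl nth_butlast)
  show "snd (win l (Suc j) f' g') \<noteq> [] \<longrightarrow> last (snd (win l (Suc j) f' g')) = Some u"
    unfolding win_def using assms
    by (auto simp: last_map)
qed

lemma Pi_I: "int_beh S n xs us \<Longrightarrow> l < n \<Longrightarrow> k \<le> n \<Longrightarrow> win l k (Obs S \<circ> xs) us \<in> Pi S l"
  unfolding Pi_def by blast

lemma Estr_I: "\<zeta> \<in> Pi S l \<Longrightarrow> int_beh S n xs us \<Longrightarrow> j \<le> n \<Longrightarrow> \<zeta> = win l j (Obs S \<circ> xs) us
  \<Longrightarrow> xs j = x \<Longrightarrow> \<zeta> \<in> Estr S l x"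
  unfolding Estr_def by blast

lemma beh_St:
  assumes "ts_wf S" "int_beh S n xs us" "i \<le> n"
  shows "xs i \<in> St S"
  using assms(3)
proof (induction i)
  case 0 then show ?case using assms unfolding ts_wf_def int_beh_def by auto
next
  case (Suc i)
  then have "(xs i, us i, xs (Suc i)) \<in> Tr S" using assms(2) unfolding int_beh_def by auto
  then show ?case using assms(1) unfolding ts_wf_def by auto
qed

lemma beh_ext:
  assumes "ts_wf S" "non_blocking S" "int_beh S n xs us" "n \<le> m"
  shows "\<exists>xs' us'. int_beh S m xs' us' \<and> (\<forall>i\<le>n. xs' i = xs i) \<and> (\<forall>i<n. us' i = us i)"
  using assms(4)
proof (induction m rule: dec_induct)
  case base then show ?case using assms(3) by blast
next
  case (step m)
  then obtain xs' us' where h: "int_beh S m xs' us'" "\<forall>i\<le>n. xs' i = xs i" "\<forall>i<n. us' i = us i"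
    by blast
  have "xs' m \<in> St S" using beh_St[OF assms(1) h(1)] by simp
  then obtain v y where t: "(xs' m, v, y) \<in> Tr S"
    using assms(2) unfolding non_blocking_def Uen_def Post_def by blast
  define xs2 where "xs2 = xs'(Suc m := y)"
  define us2 where "us2 = us'(m := v)"
  have "int_beh S (Suc m) xs2 us2"
    using h(1) t unfolding int_beh_def xs2_def us2_def
    by (auto simp: less_Suc_eq)
  moreover have "\<forall>i\<le>n. xs2 i = xs i" using h(2) step(1) unfolding xs2_def by auto
  moreover have "\<forall>i<n. us2 i = us i" using h(3) step(1) unfolding us2_def by auto
  ultimately show ?case by blast
qed

lemma step_lemma:
  assumes "ts_wf S" "non_blocking S" "\<zeta> \<in> Estr S l x" "(x, u, x') \<in> Tr S"
  shows "\<exists>\<zeta>'. (\<zeta>, u, \<zeta>') \<in> Tr (SA S l) \<and> x' \<in> St S \<and> \<zeta>' \<in> Pi S l \<and> \<zeta>' \<in> Estr S l x'"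
proof -
  obtain n j xs us where e: "\<zeta> \<in> Pi S l" "int_beh S n xs us" "j \<le> n"
    "\<zeta> = win l j (Obs S \<circ> xs) us" "xs j = x"
    using assms(3) unfolding Estr_def by blast
  have uI: "u \<in> Inp S" and x'S: "x' \<in> St S" using assms(1,4) unfolding ts_wf_def by auto
  define xs1 where "xs1 = xs(Suc j := x')"
  define us1 where "us1 = us(j := u)"
  have b1: "int_beh S (Suc j) xs1 us1"
    using e(2,3,5) assms(4) unfolding int_beh_def xs1_def us1_def
    by (auto simp: less_Suc_eq)
  obtain xs2 us2 where b2: "int_beh S (Suc j + Suc l) xs2 us2"
    "\<forall>i\<le>Suc j. xs2 i = xs1 i" "\<forall>i<Suc j. us2 i = us1 i"
    using beh_ext[OF assms(1,2) b1, of "Suc j + Suc l"] by auto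
  have a1: "\<forall>i\<le>j. (Obs S \<circ> xs2) i = (Obs S \<circ> xs) i" using b2(2) unfolding xs1_def by auto
  have a2: "\<forall>i<j. us2 i = us i" using b2(3) unfolding us1_def by auto
  have a3: "us2 j = u" using b2(3) unfolding us1_def by auto
  have x2: "xs2 (Suc j) = x'" using b2(2) unfolding xs1_def by auto
  define \<zeta>' where "\<zeta>' = win l (Suc j) (Obs S \<circ> xs2) us2"
  have P1: "\<zeta>' \<in> Pi S l" unfolding \<zeta>'_def Pi_def using b2(1)
    by (intro CollectI exI[of _ "Suc j + Suc l"] exI[of _ "Suc j"] exI[of _ xs2] exI[of _ us2]) simp
  have P2: "win (Suc l) (Suc j) (Obs S \<circ> xs2) us2 \<in> Pi S (Suc l)" unfolding Pi_def using b2(1)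
    by (intro CollectI exI[of _ "Suc j + Suc l"] exI[of _ "Suc j"] exI[of _ xs2] exI[of _ us2]) simp
  note W = win_step[OF a1 a2 a3, of l]
  have "(\<zeta>, u, \<zeta>') \<in> Tr (SA S l)"
    unfolding SA_def ts.select_convs mem_Collect_eq case_prod_conv using e(1,4) P1 P2 uI W unfolding \<zeta>'_def
    by (simp only: simp_thms)
  moreover have "\<zeta>' \<in> Estr S l x'" using Estr_I[OF P1 b2(1) _ _ x2] unfolding \<zeta>'_def by simp
  ultimately show ?thesis using x'S P1 by blast
qed

lemma init_lemma:
  assumes "ts_wf S" "non_blocking S" "int_beh S n xs us"
  shows "\<exists>xs' us'. int_beh S (Suc l) xs' us' \<and> xs' 0 = xs 0 \<and>
     win l 0 (Obs S \<circ> xs') us' = win l 0 (Obs S \<circ> xs) us"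
proof -
  have "int_beh S 0 xs us" using assms(3) unfolding int_beh_def by auto
  then obtain xs' us' where "int_beh S (Suc l) xs' us'" "xs' 0 = xs 0"
    using beh_ext[OF assms(1,2), of 0 xs us "Suc l"] by auto
  moreover have "win l 0 (Obs S \<circ> xs') us' = win l 0 (Obs S \<circ> xs) us"
    using \<open>xs' 0 = xs 0\<close> unfolding win_def by auto
  ultimately show ?thesis by blast
qed

theorem proposition1:
  fixes S :: "('x, 'u, 'y) ts" and l :: nat
  assumes "ts_wf S" and "non_blocking S" and "free_input S" and "deterministic S"
    and "St0 S = St S"
  shows "is_SR S (SA S l) {(x, \<zeta>). x \<in> St S \<and> \<zeta> \<in> St (SA S l) \<and> \<zeta> \<in> Estr S l x}
       \<and> is_ASR (SA S l) S (converse {(x, \<zeta>). x \<in> St S \<and> \<zeta> \<in> St (SA S l) \<and> \<zeta> \<in> Estr S l x})"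
proof -
  let ?R = "{(x, \<zeta>). x \<in> St S \<and> \<zeta> \<in> St (SA S l) \<and> \<zeta> \<in> Estr S l x}"
  have stSA: "St (SA S l) = Pi S l" "St0 (SA S l) = {win l 0 (Obs S \<circ> xs) us | n xs us. int_beh S n xs us}"
    "Obs (SA S l) = (\<lambda>\<zeta>. the (last (fst \<zeta>)))" "Inp (SA S l) = Inp S"
    unfolding SA_def by simp_all
  have obs: "Obs S x = Obs (SA S l) \<zeta>" if "(x, \<zeta>) \<in> ?R" for x \<zeta>
  proof -
    from that obtain n j xs us where "\<zeta> = win l j (Obs S \<circ> xs) us" "xs j = x"
      unfolding Estr_def by blast
    then show ?thesis using stSA(3) win_last[of l j "Obs S \<circ> xs" us] by simp
  qed
  have stp: "\<exists>\<zeta>'. (\<zeta>, u, \<zeta>') \<in> Tr (SA S l) \<and> (x', \<zeta>') \<in> ?R"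
    if "(x, \<zeta>) \<in> ?R" "(x, u, x') \<in> Tr S" for x \<zeta> u x'
    using step_lemma[OF assms(1,2) _ that(2), of \<zeta>] that(1) stSA(1) by auto
  have init: "\<exists>\<zeta>0\<in>St0 (SA S l). (x0, \<zeta>0) \<in> ?R" if "x0 \<in> St S" for x0
  proof -
    have "int_beh S 0 (\<lambda>_. x0) (\<lambda>_. undefined)" using that assms(5) unfolding int_beh_def by auto
    then obtain xs us where b: "int_beh S (Suc l) xs us" "xs 0 = x0"
      using beh_ext[OF assms(1,2), of 0 _ _ "Suc l"] by fastforce
    define \<zeta>0 where "\<zeta>0 = win l 0 (Obs S \<circ> xs) us"
    have "\<zeta>0 \<in> St0 (SA S l)" using stSA(2) b unfolding \<zeta>0_def by blast
    moreover have "\<zeta>0 \<in> Pi S l" unfolding \<zeta>0_def using Pi_I[OF b(1)] by simp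
    moreover have "\<zeta>0 \<in> Estr S l x0" using Estr_I[OF calculation(2) b(1) _ _ b(2)] unfolding \<zeta>0_def by simp
    ultimately show ?thesis using that stSA(1) by blast
  qed
  have SR: "is_SR S (SA S l) ?R"
    unfolding is_SR_def
  proof (intro conjI)
    show "?R \<subseteq> St S \<times> St (SA S l)" by auto
    show "\<forall>xa0\<in>St0 S. \<exists>xb0\<in>St0 (SA S l). (xa0, xb0) \<in> ?R" using init assms(5) by blast
    show "\<forall>(xa, xb)\<in>?R. Obs S xa = Obs (SA S l) xb" using obs by blast
    show "\<forall>(xa, xb)\<in>?R. Uen S xa \<subseteq> Uen (SA S l) xb \<and>
        (\<forall>u\<in>Uen S xa. \<forall>xa'. (xa, u, xa') \<in> Tr S \<longrightarrow> (\<exists>xb'. (xb, u, xb') \<in> Tr (SA S l) \<and> (xa', xb') \<in> ?R))"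
    proof (clarify, intro conjI)
      fix x \<zeta> assume r: "x \<in> St S" "\<zeta> \<in> St (SA S l)" "\<zeta> \<in> Estr S l x"
      show "Uen S x \<subseteq> Uen (SA S l) \<zeta>"
      proof
        fix u assume "u \<in> Uen S x"
        then obtain x' where "(x, u, x') \<in> Tr S" unfolding Uen_def Post_def by auto
        then show "u \<in> Uen (SA S l) \<zeta>" using stp[of x \<zeta> u x'] r unfolding Uen_def Post_def by auto
      qed
      show "\<forall>u\<in>Uen S x. \<forall>xa'. (x, u, xa') \<in> Tr S \<longrightarrow> (\<exists>xb'. (\<zeta>, u, xb') \<in> Tr (SA S l) \<and> (xa', xb') \<in> ?R)"
        using stp r by blast
    qed
  qed
  have ASR: "is_ASR (SA S l) S (converse ?R)"
    unfolding is_ASR_def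
  proof (intro conjI)
    show "converse ?R \<subseteq> St (SA S l) \<times> St S" by auto
    show "\<forall>xb0\<in>St0 (SA S l). \<exists>xa0\<in>St0 S. (xb0, xa0) \<in> converse ?R"
    proof
      fix \<zeta>0 assume "\<zeta>0 \<in> St0 (SA S l)"
      then obtain n xs us where z: "\<zeta>0 = win l 0 (Obs S \<circ> xs) us" "int_beh S n xs us"
        using stSA(2) by blast
      obtain xs' us' where b: "int_beh S (Suc l) xs' us'" "xs' 0 = xs 0"
        "win l 0 (Obs S \<circ> xs') us' = \<zeta>0"
        using init_lemma[OF assms(1,2) z(2), of l] z(1) by auto
      have x0: "xs 0 \<in> St S" using beh_St[OF assms(1) z(2), of 0] by simp
      have P: "\<zeta>0 \<in> Pi S l" using Pi_I[OF b(1), of l 0] b(3) by simp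
      have "\<zeta>0 \<in> Estr S l (xs 0)" using Estr_I[OF P b(1), of 0 "xs 0"] b(2,3) by simp
      then show "\<exists>xa0\<in>St0 S. (\<zeta>0, xa0) \<in> converse ?R" using x0 P stSA(1) assms(5) by blast
    qed
    show "\<forall>(xb, xa)\<in>converse ?R. Obs (SA S l) xb = Obs S xa" using obs by auto
    show "\<forall>(xb, xa)\<in>converse ?R. Uen (SA S l) xb \<subseteq> Uen S xa \<and>
        (\<forall>u\<in>Uen (SA S l) xb. \<forall>xa'. (xa, u, xa') \<in> Tr S \<longrightarrow> (\<exists>xb'. (xb, u, xb') \<in> Tr (SA S l) \<and> (xb', xa') \<in> converse ?R))"
    proof (clarify, intro conjI)
      fix x \<zeta> assume r: "x \<in> St S" "\<zeta> \<in> St (SA S l)" "\<zeta> \<in> Estr S l x"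
      show "Uen (SA S l) \<zeta> \<subseteq> Uen S x"
      proof
        fix u assume "u \<in> Uen (SA S l) \<zeta>"
        then have "u \<in> Inp S" unfolding Uen_def Post_def SA_def by auto
        then show "u \<in> Uen S x" using assms(3) r(1) unfolding free_input_def by auto
      qed
      show "\<forall>u\<in>Uen (SA S l) \<zeta>. \<forall>xa'. (x, u, xa') \<in> Tr S \<longrightarrow> (\<exists>xb'. (\<zeta>, u, xb') \<in> Tr (SA S l) \<and> (xb', xa') \<in> converse ?R)"
        using stp r by blast
    qed
  qed
  show ?thesis using SR ASR by blast
qed

end
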